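(* Let $\mathfrak s=\mathfrak{osp}(1|2)$ with even generators $\mathtt e,\mathtt f,\mathtt h$ and odd generators $\mathtt p,\mathtt q$, subject to $[\mathtt h,\mathtt e]=2\mathtt e$, $[\mathtt h,\mathtt f]=-2\mathtt f$, $[\mathtt e,\mathtt f]=\mathtt h$, $[\mathtt h,\mathtt p]=\mathtt p$, $[\mathtt h,\mathtt q]=-\mathtt q$, $\mathtt p^2=\mathtt e$, $\mathtt q^2=-\mathtt f$, $\mathtt p\mathtt q+\mathtt q\mathtt p=\mathtt h$, and let $\Sigma:=\mathtt p\mathtt q-\mathtt q\mathtt p+\frac12\in U(\mathfrak s)$. Let $\Bbbk=\mathbb{C}(\mathtt h)$, let $\sigma_1$ be the automorphism of $\Bbbk$ which is the identity on $\mathbb C$ and sends $\mathtt h\mapsto \mathtt h-1$, and let $R_1:=\Bbbk[x,x^{-1},\sigma_1]$ be the skew Laurent polynomial algebra (basis $x^i$, $i\in\mathbb Z$, with $x^ix^j=x^{i+j}$ and $xr=\sigma_1(r)x$ for $r\in\Bbbk$). For $u\in\Bbbk^\times$, let $N_u$ be the $R_1$-module structure on $\Bbbk$ given by $x\cdot b=\sigma_1(b)u$. For $\lambda\in\mathbb C$, let $M_{u,\lambda}:=N_u\oplus N_u$ (even $\oplus$ odd) with \[ \mathtt h\mapsto \mathtt h\,I_2,\qquad \mathtt p\mapsto \begin{pmatrix}0&x\\ x&0\end{pmatrix},\qquad \mathtt q\mapsto \begin{pmatrix}0&\frac{\mathtt h-\lambda}{2}\,x^{-1}\\[2pt] \frac{\mathtt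 h+\lambda+1}{2}\,x^{-1}&0\end{pmatrix}. \] Then: (a) This assignment defines on $M_{u,\lambda}$ the structure of a $\mathbb{Z}_2$-graded $U(\mathfrak s)$-module. (b) The element $\Sigma$ acts on $M_{u,\lambda}$ as $(\lambda+\frac12)\mathrm{diag}(1,-1)$; in particular, $\Sigma^2$ acts as $(\lambda+\tfrac12)^2\cdot\mathrm{Id}_{M_{u,\lambda}}$. (c) For the $\mathfrak{sl}_2$-Casimir $\mathtt c:=(\mathtt h+1)^2+4\mathtt f\mathtt e=(\mathtt h-1)^2+4\mathtt e\mathtt f$ (with $\mathtt e=\mathtt p^2$ and $\mathtt f=-\mathtt q^2$) one has \[ \mathtt c|_{(M_{u,\lambda})_{\bar0}}=(\lambda+1)^2,\qquad \mathtt c|_{(M_{u,\lambda})_{\bar1}}=\lambda^2 . \]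
   Context: Work over $\mathbb C$. The Lie superalgebra $\mathfrak s=\mathfrak{osp}(1|2)$, the SCasimir element $\Sigma$, the field $\Bbbk=\mathbb C(\mathtt h)$ (considered purely even), the automorphism $\sigma_1(\mathtt h)=\mathtt h-1$, the skew Laurent polynomial algebra $R_1$, and the modules $N_u$, $M_{u,\lambda}$ are as defined in the claim. *)

theory Defs
  imports "HOL-Computational_Algebra.Computational_Algebra"
          "HOL-Computational_Algebra.Normalized_Fraction"
          "HOL-Computational_Algebra.Field_as_Ring"
          "HOL-Library.Product_Plus"
begin

type_synonym kfield = "complex poly fract"

definition const_k :: "complex \<Rightarrow> kfield" where
  "const_k c = Fract [:c:] 1"

definition hvar :: kfield where
  "hvar = Fract [:0, 1:] 1"

definition shift_k :: "complex \<Rightarrow> kfield \<Rightarrow> kfield" where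
  "shift_k c r = Fract (pcompose (fst (quot_of_fract r)) [:c, 1:])
                       (pcompose (snd (quot_of_fract r)) [:c, 1:])"

definition sigma1 :: "kfield \<Rightarrow> kfield" where
  "sigma1 = shift_k (-1)"

definition sigma1_inv :: "kfield \<Rightarrow> kfield" where
  "sigma1_inv = shift_k 1"

text \<open>Action of x and x^{-1} on the R_1-module N_u = k, x.b = sigma_1(b) u.
  x^{-1} acts by the inverse map b \<mapsto> sigma_1^{-1}(b / u).\<close>
definition xact :: "kfield \<Rightarrow> kfield \<Rightarrow> kfield" where
  "xact u b = sigma1 b * u"

definition xinvact :: "kfield \<Rightarrow> kfield \<Rightarrow> kfield" where
  "xinvact u b = sigma1_inv (b / u)"

text \<open>M_{u,lambda} = N_u (even) \<oplus> N_u (odd), elements are pairs (even, odd).\<close>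
type_synonym Mvec = "kfield \<times> kfield"

definition scal :: "kfield \<Rightarrow> Mvec \<Rightarrow> Mvec" where
  "scal r v = (r * fst v, r * snd v)"

definition Hop :: "Mvec \<Rightarrow> Mvec" where
  "Hop v = (hvar * fst v, hvar * snd v)"

definition Pop :: "kfield \<Rightarrow> Mvec \<Rightarrow> Mvec" where
  "Pop u v = (xact u (snd v), xact u (fst v))"

definition Qop :: "kfield \<Rightarrow> complex \<Rightarrow> Mvec \<Rightarrow> Mvec" where
  "Qop u lam v = ((hvar - const_k lam) / 2 * xinvact u (snd v),
                  (hvar + const_k lam + 1) / 2 * xinvact u (fst v))"

definition Eop :: "kfield \<Rightarrow> Mvec \<Rightarrow> Mvec" where
  "Eop u v = Pop u (Pop u v)"

definition Fop :: "kfield \<Rightarrow> complex \<Rightarrow> Mvec \<Rightarrow> Mvec" where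
  "Fop u lam v = - Qop u lam (Qop u lam v)"

definition SigmaOp :: "kfield \<Rightarrow> complex \<Rightarrow> Mvec \<Rightarrow> Mvec" where
  "SigmaOp u lam v = Pop u (Qop u lam v) - Qop u lam (Pop u v) + scal (1/2) v"

definition Cas1 :: "kfield \<Rightarrow> complex \<Rightarrow> Mvec \<Rightarrow> Mvec" where
  "Cas1 u lam v = Hop (Hop v) + scal 2 (Hop v) + v + scal 4 (Fop u lam (Eop u v))"

definition Cas2 :: "kfield \<Rightarrow> complex \<Rightarrow> Mvec \<Rightarrow> Mvec" where
  "Cas2 u lam v = Hop (Hop v) - scal 2 (Hop v) + v + scal 4 (Eop u (Fop u lam v))"

end

theory Submission imports Defs begin

abbreviation sh :: "complex \<Rightarrow> complex poly" where "sh c \<equiv> [:c, 1:]"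

lemma pc_nz: "(b::complex poly) \<noteq> 0 \<Longrightarrow> pcompose b (sh c) \<noteq> 0"
  using pcompose_eq_0_iff[of "sh c" b] by simp

lemma shift_Fract:
  assumes "b \<noteq> 0"
  shows "shift_k c (Fract a b) = Fract (pcompose a (sh c)) (pcompose b (sh c))"
proof -
  obtain a' b' where q: "quot_of_fract (Fract a b) = (a', b')" by fastforce
  have b': "b' \<noteq> 0" using snd_quot_of_fract_nonzero[of "Fract a b"] q by simp
  have "Fract a' b' = Fract a b" using Fract_quot_of_fract[of "Fract a b"] q by simp
  hence e: "a' * b = a * b'" using eq_fract(1)[OF b' assms] by simp
  have "pcompose a' (sh c) * pcompose b (sh c) = pcompose a (sh c) * pcompose b' (sh c)"
    using e by (simp add: pcompose_mult[symmetric])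
  thus ?thesis unfolding shift_k_def q
    by (simp, subst eq_fract(1)) (auto simp: pc_nz b' assms)
qed

lemma shift_add: "shift_k c (r + s) = shift_k c r + shift_k c s"
  by (cases r, cases s) (simp add: shift_Fract pc_nz pcompose_add pcompose_mult)

lemma shift_mult: "shift_k c (r * s) = shift_k c r * shift_k c s"
  by (cases r, cases s) (simp add: shift_Fract pc_nz pcompose_mult)

lemma shift_minus: "shift_k c (- r) = - shift_k c r"
  by (cases r) (simp add: shift_Fract pc_nz pcompose_uminus)

lemma shift_diff: "shift_k c (r - s) = shift_k c r - shift_k c s"
  by (simp only: diff_conv_add_uminus shift_add shift_minus)

lemma shift_one: "shift_k c 1 = 1"
  by (simp add: One_fract_def shift_Fract pcompose_1 one_pCons[symmetric])

lemma shift_zero: "shift_k c 0 = 0"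
  by (simp add: Zero_fract_def shift_Fract pcompose_1 eq_fract)

lemma shift_comp: "shift_k c (shift_k d r) = shift_k (c + d) r"
  by (cases r) (simp add: shift_Fract pc_nz pcompose_assoc[symmetric] pcompose_pCons add.commute)

lemma shift_zero_id: "shift_k 0 r = r"
  by (cases r) (simp add: shift_Fract)

lemma shift_inverse: "shift_k c (inverse r) = inverse (shift_k c r)"
proof (cases "r = 0")
  case True thus ?thesis by (simp add: shift_zero)
next
  case False
  have "shift_k c r * shift_k c (inverse r) = 1" using False
    by (simp add: shift_mult[symmetric] shift_one)
  thus ?thesis by (metis inverse_unique)
qed

lemma shift_divide: "shift_k c (r / s) = shift_k c r / shift_k c s"
  by (simp add: divide_inverse shift_mult shift_inverse)

lemma shift_of_nat: "shift_k c (of_nat n) = of_nat n"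
  by (induct n) (simp_all add: shift_add shift_one shift_zero)

lemma shift_numeral: "shift_k c (numeral n) = numeral n"
  using shift_of_nat[of c "numeral n"] by simp

lemma shift_const: "shift_k c (const_k d) = const_k d"
  by (simp add: const_k_def shift_Fract pcompose_1)

lemma const_add: "const_k (a + b) = const_k a + const_k b"
  by (simp add: const_k_def)
lemma const_mult: "const_k (a * b) = const_k a * const_k b"
  by (simp add: const_k_def mult.commute)
lemma const_one: "const_k 1 = 1"
  by (simp add: const_k_def One_fract_def one_pCons)
lemma const_numeral: "const_k (numeral n) = numeral n"
proof -
  have "const_k (of_nat m) = of_nat m" for m
    by (induct m) (simp_all add: const_add const_one, simp add: const_k_def Zero_fract_def)
  from this[of "numeral n"] show ?thesis by simp
qed
lemma const_inverse: "const_k (inverse a) = inverse (const_k a)"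
proof (cases "a = 0")
  case True thus ?thesis by (simp add: const_k_def Zero_fract_def eq_fract)
next
  case False
  have "const_k a * const_k (inverse a) = const_k (a * inverse a)" by (simp only: const_mult)
  also have "... = 1" using False by (simp add: const_one)
  finally show ?thesis by (rule inverse_unique[symmetric])
qed
lemma const_divide: "const_k (a / b) = const_k a / const_k b"
  by (simp add: divide_inverse const_mult const_inverse)
lemma const_power: "const_k (a ^ n) = const_k a ^ n"
  by (induct n) (simp_all add: const_mult const_one)
lemma const_minus: "const_k (- a) = - const_k a"
  by (simp add: const_k_def)
lemma const_diff: "const_k (a - b) = const_k a - const_k b"
  by (simp add: const_k_def)

lemma shift_hvar: "shift_k c hvar = hvar + const_k c"
  by (simp add: hvar_def const_k_def shift_Fract pcompose_pCons pcompose_1)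

lemma two_nz: "(2::kfield) \<noteq> 0"
proof -
  have "(2::kfield) = const_k 2" by (simp add: const_numeral)
  also have "... \<noteq> 0" by (simp add: const_k_def Zero_fract_def eq_fract(1))
  finally show ?thesis .
qed

lemma sig_hvar: "sigma1 hvar = hvar - 1" unfolding sigma1_def
  by (simp add: shift_hvar const_minus const_one)
lemma sigi_hvar: "sigma1_inv hvar = hvar + 1" unfolding sigma1_inv_def
  by (simp add: shift_hvar const_one)

lemmas sig_rules = shift_add shift_mult shift_minus shift_diff shift_one shift_zero shift_divide
  shift_numeral shift_const

lemma shift_nz: "u \<noteq> 0 \<Longrightarrow> shift_k c u \<noteq> 0"
  by (metis shift_comp shift_zero shift_zero_id add.left_inverse)

lemmas unf = xact_def xinvact_def sigma1_def sigma1_inv_def sig_rules shift_comp shift_zero_id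
  shift_hvar const_minus const_one

lemma const_eq0: "const_k c = 0 \<longleftrightarrow> c = 0"
  by (simp add: const_k_def Zero_fract_def eq_fract(1))

lemma num_nz: "(numeral n :: kfield) \<noteq> 0"
  by (metis const_eq0 const_numeral zero_neq_numeral)


lemma xact_add: "xact u (a + b) = xact u a + xact u b"
  by (simp add: xact_def sigma1_def shift_add algebra_simps)
lemma xinv_add: "xinvact u (a + b) = xinvact u a + xinvact u b"
  by (simp add: xinvact_def sigma1_inv_def shift_add add_divide_distrib)
lemma xact_minus: "xact u (- a) = - xact u a"
  by (simp add: xact_def sigma1_def shift_minus)
lemma xinv_minus: "xinvact u (- a) = - xinvact u a"
  by (simp add: xinvact_def sigma1_inv_def shift_minus)
lemma xact_mult: "xact u (r * a) = shift_k (-1) r * xact u a"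
  by (simp add: xact_def sigma1_def shift_mult algebra_simps)
lemma xinv_mult: "xinvact u (r * a) = shift_k 1 r * xinvact u a"
proof -
  have "r * a / u = r * (a / u)" by simp
  thus ?thesis by (simp only: xinvact_def sigma1_inv_def shift_mult)
qed
lemma xact_xinv: "u \<noteq> 0 \<Longrightarrow> xact u (xinvact u b) = b"
  by (simp add: xact_def xinvact_def sigma1_def sigma1_inv_def shift_comp shift_zero_id)
lemma xinv_xact: "u \<noteq> 0 \<Longrightarrow> xinvact u (xact u b) = b"
  by (simp add: xact_def xinvact_def sigma1_def sigma1_inv_def shift_comp shift_zero_id shift_mult shift_nz)
lemma xact_0: "xact u 0 = 0" by (simp add: xact_def sigma1_def shift_zero)
lemma xinv_0: "xinvact u 0 = 0" by (simp add: xinvact_def sigma1_inv_def shift_zero)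

lemmas xr = xact_add xinv_add xact_minus xinv_minus xact_mult xinv_mult xact_0 xinv_0
  sig_rules shift_comp shift_zero_id shift_hvar const_minus const_one

theorem lemma21:
  fixes u :: kfield and lam :: complex
  assumes "u \<noteq> 0"
  shows
    \<comment> \<open>(a) C-linearity of the generators\<close>
    "(\<forall>v w. Hop (v + w) = Hop v + Hop w \<and> Pop u (v + w) = Pop u v + Pop u w
              \<and> Qop u lam (v + w) = Qop u lam v + Qop u lam w)
     \<and> (\<forall>c v. Hop (const_k c * fst v, const_k c * snd v) = (const_k c * fst (Hop v), const_k c * snd (Hop v))
              \<and> Pop u (const_k c * fst v, const_k c * snd v) = (const_k c * fst (Pop u v), const_k c * snd (Pop u v))
              \<and> Qop u lam (const_k c * fst v, const_k c * snd v)
                  = (const_k c * fst (Qop u lam v), const_k c * snd (Qop u lam v)))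
     \<comment> \<open>(a) Z_2-grading: h even, p and q odd\<close>
     \<and> (\<forall>a. snd (Hop (a, 0)) = 0 \<and> fst (Hop (0, a)) = 0
            \<and> fst (Pop u (a, 0)) = 0 \<and> snd (Pop u (0, a)) = 0
            \<and> fst (Qop u lam (a, 0)) = 0 \<and> snd (Qop u lam (0, a)) = 0)
     \<comment> \<open>(a) defining relations of U(osp(1|2))\<close>
     \<and> (\<forall>v. Hop (Eop u v) - Eop u (Hop v) = scal 2 (Eop u v)
          \<and> Hop (Fop u lam v) - Fop u lam (Hop v) = scal (- 2) (Fop u lam v)
          \<and> Eop u (Fop u lam v) - Fop u lam (Eop u v) = Hop v
          \<and> Hop (Pop u v) - Pop u (Hop v) = Pop u v
          \<and> Hop (Qop u lam v) - Qop u lam (Hop v) = - Qop u lam v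
          \<and> Pop u (Pop u v) = Eop u v
          \<and> Qop u lam (Qop u lam v) = - Fop u lam v
          \<and> Pop u (Qop u lam v) + Qop u lam (Pop u v) = Hop v)
     \<comment> \<open>(b) Sigma acts as (lam+1/2) diag(1,-1), Sigma^2 as (lam+1/2)^2\<close>
     \<and> (\<forall>a b. SigmaOp u lam (a, b) = (const_k (lam + 1/2) * a, - const_k (lam + 1/2) * b))
     \<and> (\<forall>v. SigmaOp u lam (SigmaOp u lam v) = (const_k ((lam + 1/2)^2) * fst v, const_k ((lam + 1/2)^2) * snd v))
     \<comment> \<open>(c) sl_2 Casimir\<close>
     \<and> (\<forall>v. Cas1 u lam v = Cas2 u lam v)
     \<and> (\<forall>a. Cas1 u lam (a, 0) = (const_k ((lam + 1)^2) * a, 0))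
     \<and> (\<forall>b. Cas1 u lam (0, b) = (0, const_k (lam^2) * b))"
proof -
  note nz = assms shift_nz[OF assms] num_nz
  note ds = Eop_def Fop_def Pop_def Qop_def Hop_def SigmaOp_def Cas1_def Cas2_def scal_def
  have A: "\<forall>v w. Hop (v + w) = Hop v + Hop w \<and> Pop u (v + w) = Pop u v + Pop u w
              \<and> Qop u lam (v + w) = Qop u lam v + Qop u lam w"
    by (auto simp: ds xr distrib_left simp del: times_divide_eq_left times_divide_eq_right)
  have B: "\<forall>c v. Hop (const_k c * fst v, const_k c * snd v) = (const_k c * fst (Hop v), const_k c * snd (Hop v))
              \<and> Pop u (const_k c * fst v, const_k c * snd v) = (const_k c * fst (Pop u v), const_k c * snd (Pop u v))
              \<and> Qop u lam (const_k c * fst v, const_k c * snd v)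
                  = (const_k c * fst (Qop u lam v), const_k c * snd (Qop u lam v))"
    by (auto simp: ds xr mult.left_commute simp del: times_divide_eq_left times_divide_eq_right)
  have C: "\<forall>a. snd (Hop (a, 0)) = 0 \<and> fst (Hop (0, a)) = 0
            \<and> fst (Pop u (a, 0)) = 0 \<and> snd (Pop u (0, a)) = 0
            \<and> fst (Qop u lam (a, 0)) = 0 \<and> snd (Qop u lam (0, a)) = 0"
    by (auto simp: ds xr)
  have D: "\<forall>v. Hop (Eop u v) - Eop u (Hop v) = scal 2 (Eop u v)
          \<and> Hop (Fop u lam v) - Fop u lam (Hop v) = scal (- 2) (Fop u lam v)
          \<and> Eop u (Fop u lam v) - Fop u lam (Eop u v) = Hop v
          \<and> Hop (Pop u v) - Pop u (Hop v) = Pop u v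
          \<and> Hop (Qop u lam v) - Qop u lam (Hop v) = - Qop u lam v
          \<and> Pop u (Pop u v) = Eop u v
          \<and> Qop u lam (Qop u lam v) = - Fop u lam v
          \<and> Pop u (Qop u lam v) + Qop u lam (Pop u v) = Hop v"
  proof (intro allI conjI)
    fix v :: Mvec
    obtain a b where v: "v = (a, b)" by (cases v)
    show "Hop (Eop u v) - Eop u (Hop v) = scal 2 (Eop u v)"
      unfolding v using num_nz by (simp add: ds xr xact_xinv xinv_xact assms del: times_divide_eq_left times_divide_eq_right, simp add: field_simps)
    show "Hop (Fop u lam v) - Fop u lam (Hop v) = scal (- 2) (Fop u lam v)"
      unfolding v using num_nz by (simp add: ds xr xact_xinv xinv_xact assms del: times_divide_eq_left times_divide_eq_right, simp add: field_simps)
    show "Eop u (Fop u lam v) - Fop u lam (Eop u v) = Hop v"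
      unfolding v using num_nz by (simp add: ds xr xact_xinv xinv_xact assms del: times_divide_eq_left times_divide_eq_right, simp add: field_simps)
    show "Hop (Pop u v) - Pop u (Hop v) = Pop u v"
      unfolding v using num_nz by (simp add: ds xr xact_xinv xinv_xact assms del: times_divide_eq_left times_divide_eq_right, simp add: field_simps)
    show "Hop (Qop u lam v) - Qop u lam (Hop v) = - Qop u lam v"
      unfolding v using num_nz by (simp add: ds xr xact_xinv xinv_xact assms del: times_divide_eq_left times_divide_eq_right, simp add: field_simps)
    show "Pop u (Pop u v) = Eop u v" by (simp add: Eop_def)
    show "Qop u lam (Qop u lam v) = - Fop u lam v" by (simp add: Fop_def)
    show "Pop u (Qop u lam v) + Qop u lam (Pop u v) = Hop v"
      unfolding v using num_nz by (simp add: ds xr xact_xinv xinv_xact assms del: times_divide_eq_left times_divide_eq_right, simp add: field_simps)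
  qed
  have c1: "const_k (lam + 1/2) = const_k lam + 1/2"
    by (simp add: const_add const_divide const_numeral const_one)
  have c2: "const_k ((lam + 1/2)^2) = (const_k lam + 1/2)^2"
    by (simp add: const_power c1)
  have c3: "const_k ((lam + 1)^2) = (const_k lam + 1)^2"
    by (simp add: const_power const_add const_one)
  have c4: "const_k (lam^2) = (const_k lam)^2"
    by (simp add: const_power)
  have E0: "\<forall>a b. SigmaOp u lam (a, b) = ((const_k lam + 1/2) * a, - (const_k lam + 1/2) * b)"
  proof (intro allI)
    fix a b
    show "SigmaOp u lam (a, b) = ((const_k lam + 1/2) * a, - (const_k lam + 1/2) * b)"
      apply (simp add: SigmaOp_def Pop_def Qop_def scal_def xr xact_xinv xinv_xact assms del: times_divide_eq_left times_divide_eq_right)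
      using num_nz apply (simp add: field_simps)
      done
  qed
  have E: "\<forall>a b. SigmaOp u lam (a, b) = (const_k (lam + 1/2) * a, - const_k (lam + 1/2) * b)"
    using E0 c1 by simp
  have F: "\<forall>v. SigmaOp u lam (SigmaOp u lam v) = (const_k ((lam + 1/2)^2) * fst v, const_k ((lam + 1/2)^2) * snd v)"
  proof
    fix v :: Mvec
    obtain a b where v: "v = (a, b)" by (cases v)
    show "SigmaOp u lam (SigmaOp u lam v) = (const_k ((lam + 1/2)^2) * fst v, const_k ((lam + 1/2)^2) * snd v)"
    proof -
      let ?k = "const_k lam + 1/2"
      have "SigmaOp u lam (SigmaOp u lam v) = (?k * (?k * a), - ?k * (- ?k * b))"
        unfolding v by (simp only: E0)
      also have "... = (?k^2 * a, ?k^2 * b)" by (simp only: power2_eq_square mult.assoc mult_minus_left mult_minus_right minus_minus)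
      finally show ?thesis unfolding c2 v by simp
    qed
  qed
  have G: "\<forall>v. Cas1 u lam v = Cas2 u lam v"
  proof
    fix v :: Mvec
    obtain a b where v: "v = (a, b)" by (cases v)
    show "Cas1 u lam v = Cas2 u lam v"
      unfolding v
      apply (simp add: ds xr xact_xinv xinv_xact assms del: times_divide_eq_left times_divide_eq_right)
      using num_nz apply (simp add: field_simps)
      done
  qed
  have H: "\<forall>a. Cas1 u lam (a, 0) = (const_k ((lam + 1)^2) * a, 0)"
  proof
    fix a
    show "Cas1 u lam (a, 0) = (const_k ((lam + 1)^2) * a, 0)"
      unfolding c3
      apply (simp add: ds xr xact_xinv xinv_xact assms del: times_divide_eq_left times_divide_eq_right)
      using num_nz apply (simp add: field_simps power2_eq_square)
      done
  qed
  have I: "\<forall>b. Cas1 u lam (0, b) = (0, const_k (lam^2) * b)"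
  proof
    fix b
    show "Cas1 u lam (0, b) = (0, const_k (lam^2) * b)"
      unfolding c4
      apply (simp add: ds xr xact_xinv xinv_xact assms del: times_divide_eq_left times_divide_eq_right)
      using num_nz apply (simp add: field_simps power2_eq_square)
      done
  qed
  show ?thesis using A B C D E F G H I by blast
qed

end
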